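(* Let $n$ be sufficiently large, let $f\colon\{0,1\}^n\to\{0,1\}$, let $\widetilde{\epsilon}>0$, let $t,r\in[\Lambda]$ with $t\ge r$, and let $H$ be a power of $2$ with $H=O(n/\widetilde{\epsilon}^2)$ and $H2^t\ge\sqrt n$, $H2^r\ge\sqrt n$. Let $I\subseteq[n]$ be nonempty with $|I|\ge H\widetilde{\epsilon}^2/2$, and suppose every $i\in I$ satisfies \[\min\{\mathrm{Score}_i^+,\mathrm{Score}_i^-\}=\min\Big\{\mathrm{Score}^+_{i,t}\cdot\tfrac{2^t}{\sqrt n},\ \mathrm{Score}^-_{i,r}\cdot\tfrac{2^r}{\sqrt n}\Big\}\in\big[1/H,\,2/H\big].\] Let $\alpha=|I|2^t/n$ and $\beta=|I|2^r/n$. Then for each $i\in I$, at least a $1/8$ fraction of the sets $S\in\mathcal{P}_{i,t}$ are informative for the $i$th coordinate.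
   Context: For $x\in\{0,1\}^n$ and $i\in[n]$, $x^{(i)}$ denotes $x$ with its $i$th bit flipped. An edge $(x,x^{(i)})$ of the hypercube is monotone if $f$ strictly increases along it in direction $i$ (from the endpoint with $i$th bit $0$ to the endpoint with $i$th bit $1$), and anti-monotone if $f$ strictly decreases along it; $E_i^+$ and $E_i^-$ denote the monotone and anti-monotone edges in direction $i$. $\textsc{AE-Search}$ is a fixed randomized query procedure that, on input a point $x\in\{0,1\}^n$ and a set $S\subseteq[n]$, outputs either an index in $S$ or nothing. $\Lambda=O(\log n)$ is a fixed positive integer parameter with $2^j\le n$ for all $j\in[\Lambda]$. For $i\in[n]$ and $j\in[\Lambda]$, $\mathcal{P}_{i,j}$ is the family of subsets of $[n]\setminus\{i\}$ of size $2^j-1$. A pair $(x,S)$ with $S\subseteq[n]\setminus\{i\}$ is a good pair for $E_i^+$ (resp. $E_i^-$) if $(x,x^{(i)})$ is a monotone (resp. anti-monotone) edge and $\textsc{AE-Search}(x,S\cup\{i\})$ returns $i$ with probability at least $1/2$. $\mathrm{Good}_i^{\pm}(S)$ is the set of $x$ with $(x,S)$ good for $E_i^\pm$, and $\mathrm{GoodFrac}_i^\pm(S)=|\mathrm{Good}_i^\pm(S)|/2^n$. A point $x$ is $j$-strong for $E_i^\pm$ if $(x,S)$ is good for $E_i^\pm$ for at least $3/4$ of the sets $S\in\mathcal{P}_{i,j}$; $\mathrm{Score}^\pm_{i,j}$ is the fraction of $x\in\{0,1\}^n$ that are $j$-strong for $E_i^\pm$, and $\mathrm{Score}_i^\pm=\max_{j\in[\Lambda]}\mathrm{Score}^\pm_{i,j}\cdot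 2^j/\sqrt n$. A set $S\in\mathcal{P}_{i,t}$ ($i\in I$) is informative for the $i$th coordinate if (1) $\mathrm{GoodFrac}_i^+(S)\ge 0.1\,\widetilde{\epsilon}^2/(\alpha\sqrt n)$, and (2) at least a $0.1$ fraction of the $(2^r-1)$-sized subsets $T\subseteq S$ satisfy $\mathrm{GoodFrac}_i^-(T)\ge 0.1\,\widetilde{\epsilon}^2/(\beta\sqrt n)$. *)

theory Defs
  imports "HOL-Probability.Probability"
begin

text \<open>Points of the hypercube {0,1}^n are encoded as subsets x of {..<n}
  (bit i of x is 1 iff i is in x); coordinates [n] are {..<n}.
  AES-Search is modelled by a parameter AES n f x S giving the output
  distribution (None = outputs nothing) of the procedure on input (x, S).\<close>

definition cube :: "nat \<Rightarrow> nat set set" where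
  "cube n = Pow {..<n}"

definition flip :: "nat set \<Rightarrow> nat \<Rightarrow> nat set" where
  "flip x i = (if i \<in> x then x - {i} else insert i x)"

text \<open>pos = True: monotone edge (f strictly increases in direction i);
  pos = False: anti-monotone edge.\<close>
definition dir_edge :: "(nat set \<Rightarrow> bool) \<Rightarrow> bool \<Rightarrow> nat \<Rightarrow> nat set \<Rightarrow> bool" where
  "dir_edge f pos i x =
     (let lo = x - {i}; hi = insert i x in
      if pos then (\<not> f lo \<and> f hi) else (f lo \<and> \<not> f hi))"

definition Pfam :: "nat \<Rightarrow> nat \<Rightarrow> nat \<Rightarrow> nat set set" where
  "Pfam n i j = {S. S \<subseteq> {..<n} - {i} \<and> card S = 2^j - 1}"

definition good_pair ::
  "(nat \<Rightarrow> (nat set \<Rightarrow> bool) \<Rightarrow> nat set \<Rightarrow> nat set \<Rightarrow> nat option pmf)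
   \<Rightarrow> nat \<Rightarrow> (nat set \<Rightarrow> bool) \<Rightarrow> bool \<Rightarrow> nat \<Rightarrow> nat set \<Rightarrow> nat set \<Rightarrow> bool" where
  "good_pair AES n f pos i x S =
     (S \<subseteq> {..<n} - {i} \<and> dir_edge f pos i x \<and>
      pmf (AES n f x (insert i S)) (Some i) \<ge> 1/2)"

definition Good where
  "Good AES n f pos i S = {x \<in> cube n. good_pair AES n f pos i x S}"

definition GoodFrac :: "_ \<Rightarrow> nat \<Rightarrow> _ \<Rightarrow> bool \<Rightarrow> nat \<Rightarrow> nat set \<Rightarrow> real" where
  "GoodFrac AES n f pos i S = real (card (Good AES n f pos i S)) / 2^n"

definition strong where
  "strong AES n f pos i j x =
     (x \<in> cube n \<and>
      real (card {S \<in> Pfam n i j. good_pair AES n f pos i x S}) \<ge> 3/4 * real (card (Pfam n i j)))"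

definition ScoreJ :: "_ \<Rightarrow> nat \<Rightarrow> _ \<Rightarrow> bool \<Rightarrow> nat \<Rightarrow> nat \<Rightarrow> real" where
  "ScoreJ AES n f pos i j = real (card {x \<in> cube n. strong AES n f pos i j x}) / 2^n"

definition Score :: "_ \<Rightarrow> nat \<Rightarrow> _ \<Rightarrow> nat \<Rightarrow> bool \<Rightarrow> nat \<Rightarrow> real" where
  "Score AES n f \<Lambda> pos i = Max ((\<lambda>j. ScoreJ AES n f pos i j * 2^j / sqrt n) ` {1..\<Lambda>})"

definition informative ::
  "_ \<Rightarrow> nat \<Rightarrow> _ \<Rightarrow> real \<Rightarrow> real \<Rightarrow> real \<Rightarrow> nat \<Rightarrow> nat \<Rightarrow> nat set \<Rightarrow> bool" where
  "informative AES n f \<epsilon> \<alpha> \<beta> r i S =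
     (GoodFrac AES n f True i S \<ge> 0.1 * \<epsilon>^2 / (\<alpha> * sqrt n) \<and>
      real (card {T. T \<subseteq> S \<and> card T = 2^r - 1 \<and>
                      GoodFrac AES n f False i T \<ge> 0.1 * \<epsilon>^2 / (\<beta> * sqrt n)})
        \<ge> 0.1 * real (card {T. T \<subseteq> S \<and> card T = 2^r - 1}))"

end

theory Submission
  imports Defs
begin


lemma card_filter_sum:
  assumes "finite A"
  shows "real (card {x\<in>A. P x}) = (\<Sum>x\<in>A. if P x then 1 else 0)"
  using assms by (simp add: sum.If_cases Int_def)

lemma lemA:
  fixes X :: "'x set" and P :: "'s set" and c :: real
  assumes fX: "finite X" and fP: "finite P" and sub: "Str \<subseteq> X" and pos: "card Str > 0"
    and str: "\<forall>x\<in>Str. 3/4 * real (card P) \<le> real (card {S\<in>P. G x S})"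
    and c: "c \<le> real (card Str) / 5"
  shows "11/16 * real (card P) \<le> real (card {S\<in>P. c \<le> real (card {x\<in>X. G x S})})"
proof -
  define F where "F = {S\<in>P. \<not> c \<le> real (card {x\<in>X. G x S})}"
  have fF: "finite F" using fP F_def by simp
  have fS: "finite Str" using fX sub finite_subset by blast
  have FP: "F \<subseteq> P" using F_def by auto
  have split: "card {S\<in>P. c \<le> real (card {x\<in>X. G x S})} = card P - card F"
  proof -
    have "{S\<in>P. c \<le> real (card {x\<in>X. G x S})} = P - F" using F_def by auto
    then show ?thesis using card_Diff_subset[OF fF FP] by simp
  qed
  have low: "real (card F) - real (card P)/4 \<le> real (card {S\<in>F. G x S})" if x: "x \<in> Str" for x
  proof -
    have "{S\<in>P. G x S} \<subseteq> {S\<in>F. G x S} \<union> (P - F)" by auto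
    then have "card {S\<in>P. G x S} \<le> card ({S\<in>F. G x S} \<union> (P - F))"
      by (intro card_mono) (use fP fF in auto)
    also have "\<dots> \<le> card {S\<in>F. G x S} + card (P - F)" by (rule card_Un_le)
    finally have "real (card {S\<in>P. G x S}) \<le> real (card {S\<in>F. G x S}) + real (card P) - real (card F)"
      using card_Diff_subset[OF fF FP] card_mono[OF fP FP] by linarith
    then show ?thesis using str x by fastforce
  qed
  have up: "real (card {x\<in>Str. G x S}) \<le> real (card Str) / 5" if S: "S \<in> F" for S
  proof -
    have "card {x\<in>Str. G x S} \<le> card {x\<in>X. G x S}" by (intro card_mono) (use fX sub in auto)
    then show ?thesis using S F_def c by force
  qed
  have swap: "(\<Sum>x\<in>Str. real (card {S\<in>F. G x S})) = (\<Sum>S\<in>F. real (card {x\<in>Str. G x S}))"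
    using fS fF by (simp add: card_filter_sum sum.swap[of _ Str F])
  have "real (card Str) * (real (card F) - real (card P)/4) = (\<Sum>x\<in>Str. real (card F) - real (card P)/4)"
    by simp
  also have "\<dots> \<le> (\<Sum>x\<in>Str. real (card {S\<in>F. G x S}))" by (intro sum_mono low)
  also have "\<dots> = (\<Sum>S\<in>F. real (card {x\<in>Str. G x S}))" by (rule swap)
  also have "\<dots> \<le> (\<Sum>S\<in>F. real (card Str) / 5)" by (intro sum_mono up)
  also have "\<dots> = real (card Str) * (real (card F) / 5)" by simp
  finally have "real (card Str) * (real (card F) - real (card P)/4) \<le> real (card Str) * (real (card F) / 5)" .
  then have "real (card F) - real (card P)/4 \<le> real (card F) / 5"
    using pos by (simp add: mult_le_cancel_left_pos)
  then show ?thesis using split card_mono[OF fP FP] by simp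
qed

lemma count_sup:
  assumes fU: "finite U" and T: "T \<subseteq> U" "card T = b" and ba: "b \<le> a"
  shows "card {S. S \<subseteq> U \<and> card S = a \<and> T \<subseteq> S} = (card U - b) choose (a - b)"
proof -
  have fT: "finite T" using fU T finite_subset by blast
  have "bij_betw (\<lambda>A. A \<union> T) {A. A \<subseteq> U - T \<and> card A = a - b} {S. S \<subseteq> U \<and> card S = a \<and> T \<subseteq> S}"
  proof (rule bij_betw_byWitness[where f' = "\<lambda>S. S - T"])
    show "\<forall>A\<in>{A. A \<subseteq> U - T \<and> card A = a - b}. A \<union> T - T = A" by auto
    show "\<forall>S\<in>{S. S \<subseteq> U \<and> card S = a \<and> T \<subseteq> S}. S - T \<union> T = S" by auto
    show "(\<lambda>A. A \<union> T) ` {A. A \<subseteq> U - T \<and> card A = a - b} \<subseteq> {S. S \<subseteq> U \<and> card S = a \<and> T \<subseteq> S}"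
    proof safe
      fix A assume A: "A \<subseteq> U - T" "card A = a - b"
      have fA: "finite A" using A fU finite_subset by blast
      have "card (A \<union> T) = card A + card T" using A fA fT by (intro card_Un_disjoint) auto
      then show "card (A \<union> T) = a" using A T ba by simp
    qed (use T in auto)
    show "(\<lambda>S. S - T) ` {S. S \<subseteq> U \<and> card S = a \<and> T \<subseteq> S} \<subseteq> {A. A \<subseteq> U - T \<and> card A = a - b}"
    proof safe
      fix S assume S: "S \<subseteq> U" "T \<subseteq> S" "a = card S"
      have fS: "finite S" using S fU finite_subset by blast
      show "card (S - T) = card S - b" using card_Diff_subset[OF fT S(2)] T by simp
    qed (use T in auto)
  qed
  then have "card {S. S \<subseteq> U \<and> card S = a \<and> T \<subseteq> S} = card {A. A \<subseteq> U - T \<and> card A = a - b}"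
    by (simp add: bij_betw_same_card)
  also have "\<dots> = card (U - T) choose (a - b)" using fU by (simp add: n_subsets)
  also have "card (U - T) = card U - b" using card_Diff_subset[OF fT T(1)] T by simp
  finally show ?thesis .
qed

lemma dcount:
  assumes fU: "finite U" and ba: "b \<le> a"
  shows "(\<Sum>S\<in>{S. S \<subseteq> U \<and> card S = a}. real (card {T. T \<subseteq> S \<and> card T = b \<and> Q T}))
         = real (card {T\<in>{T. T \<subseteq> U \<and> card T = b}. Q T}) * real ((card U - b) choose (a - b))"
proof -
  define P where "P = {S. S \<subseteq> U \<and> card S = a}"
  define P' where "P' = {T. T \<subseteq> U \<and> card T = b}"
  define m where "m = (card U - b) choose (a - b)"
  have fP: "finite P" unfolding P_def using fU by simp
  have fP': "finite P'" unfolding P'_def using fU by simp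
  have e1: "real (card {T. T \<subseteq> S \<and> card T = b \<and> Q T}) = (\<Sum>T\<in>P'. if T \<subseteq> S \<and> Q T then 1 else 0)"
    if S: "S \<in> P" for S
  proof -
    have "{T. T \<subseteq> S \<and> card T = b \<and> Q T} = {T\<in>P'. T \<subseteq> S \<and> Q T}" using S unfolding P_def P'_def by auto
    then show ?thesis using fP' card_filter_sum[OF fP', of "\<lambda>T. T \<subseteq> S \<and> Q T"] by simp
  qed
  have e2: "(\<Sum>S\<in>P. (if T \<subseteq> S \<and> Q T then 1 else 0 :: real)) = (if Q T then real m else 0)"
    if T: "T \<in> P'" for T
  proof (cases "Q T")
    case True
    have "(\<Sum>S\<in>P. (if T \<subseteq> S \<and> Q T then 1 else 0 :: real)) = real (card {S\<in>P. T \<subseteq> S})"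
      using card_filter_sum[OF fP, of "\<lambda>S. T \<subseteq> S"] True by simp
    also have "{S\<in>P. T \<subseteq> S} = {S. S \<subseteq> U \<and> card S = a \<and> T \<subseteq> S}" unfolding P_def by auto
    also have "card \<dots> = m" unfolding m_def using T fU ba unfolding P'_def by (intro count_sup) auto
    finally show ?thesis using True by simp
  qed simp
  have "(\<Sum>S\<in>P. real (card {T. T \<subseteq> S \<and> card T = b \<and> Q T})) =
        (\<Sum>S\<in>P. \<Sum>T\<in>P'. (if T \<subseteq> S \<and> Q T then 1 else 0 :: real))"
    by (intro sum.cong refl e1)
  also have "\<dots> = (\<Sum>T\<in>P'. \<Sum>S\<in>P. (if T \<subseteq> S \<and> Q T then 1 else 0 :: real))" by (rule sum.swap)
  also have "\<dots> = (\<Sum>T\<in>P'. (if Q T then real m else 0))" by (intro sum.cong refl e2)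
  also have "\<dots> = (\<Sum>T\<in>P'. (if Q T then 1 else 0) * real m)" by (intro sum.cong) auto
  also have "\<dots> = real (card {T\<in>P'. Q T}) * real m"
    using card_filter_sum[OF fP', of Q] by (simp add: sum_distrib_right)
  finally show ?thesis unfolding P_def P'_def m_def .
qed

lemma lemB:
  assumes fU: "finite U" and ba: "b \<le> a"
    and hB: "11/16 * real (card {T. T \<subseteq> U \<and> card T = b}) \<le> real (card {T\<in>{T. T \<subseteq> U \<and> card T = b}. Q T})"
  shows "7/16 * real (card {S. S \<subseteq> U \<and> card S = a}) \<le>
    real (card {S\<in>{S. S \<subseteq> U \<and> card S = a}. 0.1 * real (card {T. T \<subseteq> S \<and> card T = b}) \<le> real (card {T. T \<subseteq> S \<and> card T = b \<and> Q T})})"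
proof -
  define P where "P = {S. S \<subseteq> U \<and> card S = a}"
  define P' where "P' = {T. T \<subseteq> U \<and> card T = b}"
  define m where "m = (card U - b) choose (a - b)"
  define k where "k = a choose b"
  define cnt where "cnt S = real (card {T. T \<subseteq> S \<and> card T = b \<and> Q T})" for S
  define G2 where "G2 = {S\<in>P. 0.1 * real (card {T. T \<subseteq> S \<and> card T = b}) \<le> cnt S}"
  have fP: "finite P" unfolding P_def using fU by simp
  have kpos: "real k > 0" unfolding k_def using ba by simp
  have kS: "card {T. T \<subseteq> S \<and> card T = b} = k" if "S \<in> P" for S
  proof -
    have "finite S" using that fU unfolding P_def using finite_subset by blast
    then show ?thesis using that unfolding P_def k_def by (simp add: n_subsets)
  qed
  have cntle: "cnt S \<le> real k" if "S \<in> P" for S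
  proof -
    have "finite S" using that fU unfolding P_def using finite_subset by blast
    then have "card {T. T \<subseteq> S \<and> card T = b \<and> Q T} \<le> card {T. T \<subseteq> S \<and> card T = b}"
      by (intro card_mono) auto
    then show ?thesis using kS[OF that] unfolding cnt_def by simp
  qed
  have dQ: "(\<Sum>S\<in>P. cnt S) = real (card {T\<in>P'. Q T}) * real m"
    unfolding P_def P'_def m_def cnt_def using dcount[OF fU ba] by blast
  have dT: "(\<Sum>S\<in>P. real k) = real (card P') * real m"
  proof -
    have "(\<Sum>S\<in>P. real k) = (\<Sum>S\<in>P. real (card {T. T \<subseteq> S \<and> card T = b \<and> True}))"
      using kS by simp
    also have "\<dots> = real (card {T\<in>P'. True}) * real m"
      unfolding P_def P'_def m_def using dcount[OF fU ba, of "\<lambda>_. True"] by blast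
    finally show ?thesis by simp
  qed
  have G2P: "G2 \<subseteq> P" unfolding G2_def by auto
  have fG2: "finite G2" using fP G2P finite_subset by blast
  have "(\<Sum>S\<in>P. cnt S) \<le> (\<Sum>S\<in>P. if S \<in> G2 then real k else 0.1 * real k)"
  proof (intro sum_mono)
    fix S assume S: "S \<in> P"
    show "cnt S \<le> (if S \<in> G2 then real k else 0.1 * real k)"
      using cntle[OF S] kS[OF S] S unfolding G2_def by auto
  qed
  also have "\<dots> = real k * real (card G2) + 0.1 * real k * (real (card P) - real (card G2))"
  proof -
    have "(\<Sum>S\<in>P. if S \<in> G2 then real k else 0.1 * real k) = real k * real (card (P \<inter> G2)) + 0.1 * real k * real (card (P - G2))"
      using fP by (simp add: sum.If_cases Int_def Diff_eq)
    moreover have "P \<inter> G2 = G2" using G2P by auto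
    moreover have "real (card (P - G2)) = real (card P) - real (card G2)"
      using card_Diff_subset[OF fG2 G2P] card_mono[OF fP G2P] by simp
    ultimately show ?thesis by simp
  qed
  finally have A: "real (card {T\<in>P'. Q T}) * real m \<le> real k * real (card G2) + 0.1 * real k * (real (card P) - real (card G2))"
    using dQ by simp
  have B: "11/16 * (real (card P') * real m) \<le> real (card {T\<in>P'. Q T}) * real m"
    using mult_right_mono[OF hB, of "real m"] unfolding P'_def by (simp add: mult.assoc)
  have C: "real (card P') * real m = real k * real (card P)" using dT by (simp add: mult.commute)
  have E: "real k * (11/16 * real (card P)) = 11/16 * (real (card P') * real m)" using C by simp
  have F: "real k * real (card G2) + 0.1 * real k * (real (card P) - real (card G2)) = real k * (0.9 * real (card G2) + 0.1 * real (card P))"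
    by (simp add: field_simps)
  have "real k * (11/16 * real (card P)) \<le> real k * (0.9 * real (card G2) + 0.1 * real (card P))"
    using A B E F by linarith
  then have "11/16 * real (card P) \<le> 0.9 * real (card G2) + 0.1 * real (card P)"
    using kpos by (simp add: mult_le_cancel_left_pos)
  then have "7/16 * real (card P) \<le> real (card G2)" using card_mono[OF fP G2P] by linarith
  then show ?thesis unfolding G2_def P_def cnt_def by simp
qed


lemma numeric:
  fixes n ci H e2 s p :: real
  assumes "n > 0" "ci > 0" "H > 0" "e2 \<ge> 0" "ci \<ge> H*e2/2" "s*p/sqrt n \<ge> 1/H" "p > 0"
  shows "0.1*e2/((ci*p/n)* sqrt n) \<le> s/5"
proof -
  have sq: "sqrt n > 0" using assms by simp
  have nn: "n / sqrt n = sqrt n" using sq by (metis real_div_sqrt assms(1) less_imp_le)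
  have s1: "s \<ge> sqrt n/(H*p)" using assms sq by (simp add: field_simps)
  have e: "e2 \<le> 2*ci/H" using assms by (simp add: field_simps)
  have "0.1*e2/((ci*p/n)* sqrt n) = 0.1*e2*(n/sqrt n)/(ci*p)" using assms sq by (simp add: field_simps)
  also have "\<dots> = 0.1*e2* sqrt n/(ci*p)" using nn by simp
  also have "\<dots> \<le> 0.1*(2*ci/H)* sqrt n/(ci*p)" using e assms sq
    by (intro divide_right_mono mult_right_mono mult_left_mono) auto
  also have "\<dots> = 0.2 * (sqrt n/(H*p))" using assms by (simp add: field_simps)
  also have "\<dots> \<le> 0.2 * s" using s1 by simp
  finally show ?thesis by simp
qed

lemma score_part:
  assumes th: "\<theta> \<le> ScoreJ AES n f pos i j / 5" and sp: "ScoreJ AES n f pos i j > 0"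
  shows "11/16 * real (card (Pfam n i j)) \<le> real (card {S\<in>Pfam n i j. \<theta> \<le> GoodFrac AES n f pos i S})"
proof -
  define Str where "Str = {x\<in>cube n. strong AES n f pos i j x}"
  have fX: "finite (cube n)" unfolding cube_def by simp
  have fP: "finite (Pfam n i j)" unfolding Pfam_def by simp
  have sub: "Str \<subseteq> cube n" unfolding Str_def by auto
  have cS: "real (card Str) = ScoreJ AES n f pos i j * 2^n" unfolding ScoreJ_def Str_def by simp
  have pos: "card Str > 0" using cS sp by (metis gr0I mult_pos_pos of_nat_0 zero_less_numeral zero_less_power less_irrefl)
  have str: "\<forall>x\<in>Str. 3/4 * real (card (Pfam n i j)) \<le> real (card {S\<in>Pfam n i j. good_pair AES n f pos i x S})"
    unfolding Str_def strong_def by auto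
  have c: "\<theta> * 2^n \<le> real (card Str) / 5" using th cS by (simp add: field_simps)
  have "11/16 * real (card (Pfam n i j)) \<le> real (card {S\<in>Pfam n i j. \<theta> * 2^n \<le> real (card {x\<in>cube n. good_pair AES n f pos i x S})})"
    by (rule lemA[OF fX fP sub pos str c])
  also have "{S\<in>Pfam n i j. \<theta> * 2^n \<le> real (card {x\<in>cube n. good_pair AES n f pos i x S})} = {S\<in>Pfam n i j. \<theta> \<le> GoodFrac AES n f pos i S}"
    unfolding GoodFrac_def Good_def by (simp add: pos_le_divide_eq)
  finally show ?thesis .
qed


theorem mainTheorem1:
  fixes AES :: "nat \<Rightarrow> (nat set \<Rightarrow> bool) \<Rightarrow> nat set \<Rightarrow> nat set \<Rightarrow> nat option pmf"
  shows "\<forall>C>0. \<exists>N. \<forall>n\<ge>N. \<forall>(f :: nat set \<Rightarrow> bool) (\<Lambda>::nat) (\<epsilon>::real) (t::nat) (r::nat) (H::nat) (I::nat set).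
      \<Lambda> \<ge> 1 \<and> 2^\<Lambda> \<le> n \<and> real \<Lambda> \<le> C * ln (real n) \<and>
      \<epsilon> > 0 \<and> t \<in> {1..\<Lambda>} \<and> r \<in> {1..\<Lambda>} \<and> t \<ge> r \<and>
      (\<exists>k. H = 2^k) \<and> real H \<le> C * real n / \<epsilon>^2 \<and>
      real H * 2^t \<ge> sqrt (real n) \<and> real H * 2^r \<ge> sqrt (real n) \<and>
      I \<subseteq> {..<n} \<and> I \<noteq> {} \<and> real (card I) \<ge> real H * \<epsilon>^2 / 2 \<and>
      (\<forall>i\<in>I.
         min (Score AES n f \<Lambda> True i) (Score AES n f \<Lambda> False i) =
           min (ScoreJ AES n f True i t * 2^t / sqrt (real n))
               (ScoreJ AES n f False i r * 2^r / sqrt (real n)) \<and>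
         min (Score AES n f \<Lambda> True i) (Score AES n f \<Lambda> False i) \<in> {1 / real H .. 2 / real H})
      \<longrightarrow>
      (\<forall>i\<in>I.
         real (card {S \<in> Pfam n i t.
                 informative AES n f \<epsilon> (real (card I) * 2^t / real n)
                   (real (card I) * 2^r / real n) r i S})
           \<ge> 1/8 * real (card (Pfam n i t)))"
  
proof (intro allI impI)
  fix C :: real assume "C > 0"
  show "\<exists>N. \<forall>n\<ge>N. \<forall>(f :: nat set \<Rightarrow> bool) (\<Lambda>::nat) (\<epsilon>::real) (t::nat) (r::nat) (H::nat) (I::nat set).
      \<Lambda> \<ge> 1 \<and> 2^\<Lambda> \<le> n \<and> real \<Lambda> \<le> C * ln (real n) \<and>
      \<epsilon> > 0 \<and> t \<in> {1..\<Lambda>} \<and> r \<in> {1..\<Lambda>} \<and> t \<ge> r \<and>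
      (\<exists>k. H = 2^k) \<and> real H \<le> C * real n / \<epsilon>^2 \<and>
      real H * 2^t \<ge> sqrt (real n) \<and> real H * 2^r \<ge> sqrt (real n) \<and>
      I \<subseteq> {..<n} \<and> I \<noteq> {} \<and> real (card I) \<ge> real H * \<epsilon>^2 / 2 \<and>
      (\<forall>i\<in>I.
         min (Score AES n f \<Lambda> True i) (Score AES n f \<Lambda> False i) =
           min (ScoreJ AES n f True i t * 2^t / sqrt (real n))
               (ScoreJ AES n f False i r * 2^r / sqrt (real n)) \<and>
         min (Score AES n f \<Lambda> True i) (Score AES n f \<Lambda> False i) \<in> {1 / real H .. 2 / real H})
      \<longrightarrow>
      (\<forall>i\<in>I.
         real (card {S \<in> Pfam n i t.
                 informative AES n f \<epsilon> (real (card I) * 2^t / real n)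
                   (real (card I) * 2^r / real n) r i S})
           \<ge> 1/8 * real (card (Pfam n i t)))"
  proof (intro exI[of _ "0::nat"] allI impI ballI)
    fix n :: nat and f :: "nat set \<Rightarrow> bool" and \<Lambda> :: nat and \<epsilon> :: real and t r H :: nat and I :: "nat set" and i :: nat
    assume hyp: "\<Lambda> \<ge> 1 \<and> 2^\<Lambda> \<le> n \<and> real \<Lambda> \<le> C * ln (real n) \<and>
      \<epsilon> > 0 \<and> t \<in> {1..\<Lambda>} \<and> r \<in> {1..\<Lambda>} \<and> t \<ge> r \<and>
      (\<exists>k. H = 2^k) \<and> real H \<le> C * real n / \<epsilon>^2 \<and>
      real H * 2^t \<ge> sqrt (real n) \<and> real H * 2^r \<ge> sqrt (real n) \<and>
      I \<subseteq> {..<n} \<and> I \<noteq> {} \<and> real (card I) \<ge> real H * \<epsilon>^2 / 2 \<and>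
      (\<forall>i\<in>I.
         min (Score AES n f \<Lambda> True i) (Score AES n f \<Lambda> False i) =
           min (ScoreJ AES n f True i t * 2^t / sqrt (real n))
               (ScoreJ AES n f False i r * 2^r / sqrt (real n)) \<and>
         min (Score AES n f \<Lambda> True i) (Score AES n f \<Lambda> False i) \<in> {1 / real H .. 2 / real H})"
      and i: "i \<in> I"
    have L: "2^\<Lambda> \<le> n" using hyp by blast
    have npos: "real n > 0" proof -
      have "(1::nat) \<le> 2^\<Lambda>" by simp
      then have "1 \<le> n" using L by linarith
      then show ?thesis by simp
    qed
    have rt: "r \<le> t" using hyp by blast
    have Hpos: "real H > 0" using hyp by auto
    have fI: "finite I" using hyp finite_subset by blast
    have cI: "real (card I) > 0" using hyp fI by (simp add: card_gt_0_iff)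
    have cIH: "real (card I) \<ge> real H * \<epsilon>^2 / 2" using hyp by blast
    have sc: "min (ScoreJ AES n f True i t * 2^t / sqrt (real n))
               (ScoreJ AES n f False i r * 2^r / sqrt (real n)) \<ge> 1 / real H"
      using hyp i by auto
    then have sc1: "ScoreJ AES n f True i t * 2^t / sqrt (real n) \<ge> 1 / real H"
      and sc2: "ScoreJ AES n f False i r * 2^r / sqrt (real n) \<ge> 1 / real H" by auto
    have sq: "sqrt (real n) > 0" using npos by simp
    have s1pos: "ScoreJ AES n f True i t > 0"
    proof -
      have "ScoreJ AES n f True i t * 2^t / sqrt (real n) > 0" using sc1 Hpos
        by (meson less_le_trans zero_less_divide_1_iff)
      then show ?thesis using sq by (simp add: zero_less_divide_iff zero_less_mult_iff)
    qed
    have s2pos: "ScoreJ AES n f False i r > 0"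
    proof -
      have "ScoreJ AES n f False i r * 2^r / sqrt (real n) > 0" using sc2 Hpos
        by (meson less_le_trans zero_less_divide_1_iff)
      then show ?thesis using sq by (simp add: zero_less_divide_iff zero_less_mult_iff)
    qed
    define \<theta>1 where "\<theta>1 = 0.1 * \<epsilon>^2 / (real (card I) * 2^t / real n * sqrt (real n))"
    define \<theta>2 where "\<theta>2 = 0.1 * \<epsilon>^2 / (real (card I) * 2^r / real n * sqrt (real n))"
    have th1: "\<theta>1 \<le> ScoreJ AES n f True i t / 5" unfolding \<theta>1_def
      by (rule numeric[OF npos cI Hpos _ cIH sc1]) auto
    have th2: "\<theta>2 \<le> ScoreJ AES n f False i r / 5" unfolding \<theta>2_def
      by (rule numeric[OF npos cI Hpos _ cIH sc2]) auto
    define P where "P = Pfam n i t"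
    define A1 where "A1 = {S\<in>P. \<theta>1 \<le> GoodFrac AES n f True i S}"
    have hA1: "11/16 * real (card P) \<le> real (card A1)" unfolding A1_def P_def
      by (rule score_part[OF th1 s1pos])
    have hB: "11/16 * real (card (Pfam n i r)) \<le> real (card {T\<in>Pfam n i r. \<theta>2 \<le> GoodFrac AES n f False i T})"
      by (rule score_part[OF th2 s2pos])
    have ba: "2^r - 1 \<le> (2::nat)^t - 1" using rt by (simp add: diff_le_mono power_increasing)
    define G2 where "G2 = {S\<in>P. 0.1 * real (card {T. T \<subseteq> S \<and> card T = 2^r - 1}) \<le>
        real (card {T. T \<subseteq> S \<and> card T = 2^r - 1 \<and> \<theta>2 \<le> GoodFrac AES n f False i T})}"
    have hG2: "7/16 * real (card P) \<le> real (card G2)"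
      unfolding G2_def P_def Pfam_def
      by (rule lemB) (use hB ba in \<open>auto simp: Pfam_def\<close>)
    have fP: "finite P" unfolding P_def Pfam_def by simp
    have A1P: "A1 \<subseteq> P" and G2P: "G2 \<subseteq> P" unfolding A1_def G2_def by auto
    have "card (A1 \<union> G2) + card (A1 \<inter> G2) = card A1 + card G2"
      using card_Un_Int[of A1 G2] fP A1P G2P finite_subset by metis
    moreover have "card (A1 \<union> G2) \<le> card P" using A1P G2P fP by (intro card_mono) auto
    ultimately have "1/8 * real (card P) \<le> real (card (A1 \<inter> G2))" using hA1 hG2 by linarith
    also have "card (A1 \<inter> G2) \<le> card {S \<in> Pfam n i t.
                 informative AES n f \<epsilon> (real (card I) * 2^t / real n)
                   (real (card I) * 2^r / real n) r i S}"
      by (intro card_mono) (auto simp: P_def Pfam_def A1_def G2_def informative_def \<theta>1_def \<theta>2_def)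
    finally show "1/8 * real (card (Pfam n i t)) \<le> real (card {S \<in> Pfam n i t.
                 informative AES n f \<epsilon> (real (card I) * 2^t / real n)
                   (real (card I) * 2^r / real n) r i S})" unfolding P_def by simp
  qed
qed

end
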